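(* Let $\Omega\subset\mathbb{R}^N$, $N\ge2$, be a bounded domain with boundary of class $\mathcal{C}^{1,1}$. Let $c_+,c_-,h^+\in L^q(\Omega)$ for some $q>N/2$ and $\mu,h^-\in L^\infty(\Omega)$, with $c_+\ge0$, $c_-\ge0$, $c_+c_-=0$ a.e. in $\Omega$, $|\Omega_+|>0$ where $\Omega_+:=\operatorname{Supp}(c_+)$, and assume there exist $\epsilon>0$, $\mu_1>0$ such that $\mu\ge\mu_1$ and $c_-=0$ a.e. in $\{x\in\Omega:d(x,\Omega_+)<\epsilon\}$. For $\lambda\in\mathbb{R}$ consider $$(P_\lambda)\qquad -\Delta u=(\lambda c_+(x)-c_-(x))u+\mu(x)|\nabla u|^2+h(x),\qquad u\in H_0^1(\Omega)\cap L^\infty(\Omega).$$ Assume $(P_0)$ has a solution $u_0$ for which there exist $\overline x\in\Omega$ and $R>0$ with $B_R(\overline x)\subset\Omega$ such that $c_+u_0\gneqq0$, $c_-\equiv0$ and $\mu\ge0$ in $B_R(\overline x)$. Then there exists $\overline\Lambda\in(0,\infty)$ such that, for every $\lambda\ge\overline\Lambda$, problem $(P_\lambda)$ has no solution $u$ with $u\ge u_0$ in $B_R(\overline x)$.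
   Context: $h^\pm=\max(\pm h,0)$. For $f\in L^p(\Omega)$, $\operatorname{Supp}(f)$ is the complement in $\Omega$ of the largest open set on which $f=0$ a.e. A solution of $(P_\lambda)$ is $u\in H_0^1(\Omega)\cap L^\infty(\Omega)$ with $\int_\Omega\nabla u\cdot\nabla\varphi=\int_\Omega[(\lambda c_+-c_-)u+\mu|\nabla u|^2+h]\varphi$ for all $\varphi\in H_0^1(\Omega)\cap L^\infty(\Omega)$. "$c_+u_0\gneqq0$ in $B_R(\overline x)$" means $c_+u_0\ge0$ a.e. in $B_R(\overline x)$ and $c_+u_0>0$ on a subset of $B_R(\overline x)$ of positive measure. *)

theory Defs
  imports "HOL-Analysis.Analysis"
begin

definition Lp_on :: "'a::euclidean_space set \<Rightarrow> real \<Rightarrow> ('a \<Rightarrow> real) \<Rightarrow> bool" where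
  "Lp_on \<Omega> q f \<longleftrightarrow> f \<in> borel_measurable (lebesgue_on \<Omega>)
      \<and> integrable (lebesgue_on \<Omega>) (\<lambda>x. \<bar>f x\<bar> powr q)"

definition Linf_on :: "'a::euclidean_space set \<Rightarrow> ('a \<Rightarrow> real) \<Rightarrow> bool" where
  "Linf_on \<Omega> f \<longleftrightarrow> f \<in> borel_measurable (lebesgue_on \<Omega>)
      \<and> (\<exists>C. AE x in lebesgue. x \<in> \<Omega> \<longrightarrow> \<bar>f x\<bar> \<le> C)"

text \<open>C^infinity functions: all iterated directional derivatives exist everywhere.\<close>
definition smooth_fun :: "('a::euclidean_space \<Rightarrow> real) \<Rightarrow> bool" where
  "smooth_fun f \<longleftrightarrow> (\<exists>F. f \<in> F \<and> (\<forall>g\<in>F. (\<forall>x. g differentiable (at x))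
      \<and> (\<forall>v. (\<lambda>x. frechet_derivative g (at x) v) \<in> F)))"

definition grad :: "('a::euclidean_space \<Rightarrow> real) \<Rightarrow> 'a \<Rightarrow> 'a" where
  "grad f x = (\<Sum>i\<in>Basis. frechet_derivative f (at x) i *\<^sub>R i)"

definition test_fun :: "'a::euclidean_space set \<Rightarrow> ('a \<Rightarrow> real) \<Rightarrow> bool" where
  "test_fun \<Omega> \<phi> \<longleftrightarrow> smooth_fun \<phi> \<and> compact (closure {x. \<phi> x \<noteq> 0})
      \<and> closure {x. \<phi> x \<noteq> 0} \<subseteq> \<Omega>"

definition weak_grad :: "'a::euclidean_space set \<Rightarrow> ('a \<Rightarrow> real) \<Rightarrow> ('a \<Rightarrow> 'a) \<Rightarrow> bool" where
  "weak_grad \<Omega> u G \<longleftrightarrow> (\<forall>\<phi>. test_fun \<Omega> \<phi> \<longrightarrow> (\<forall>i\<in>Basis.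
      (LINT x:\<Omega>|lebesgue. u x * frechet_derivative \<phi> (at x) i)
      = - (LINT x:\<Omega>|lebesgue. (G x \<bullet> i) * \<phi> x)))"

text \<open>u belongs to H_0^1(Omega) (closure of C_c^infinity(Omega) in the H^1 norm), with weak gradient G.\<close>
definition H01 :: "'a::euclidean_space set \<Rightarrow> ('a \<Rightarrow> real) \<Rightarrow> ('a \<Rightarrow> 'a) \<Rightarrow> bool" where
  "H01 \<Omega> u G \<longleftrightarrow> Lp_on \<Omega> 2 u \<and> G \<in> borel_measurable (lebesgue_on \<Omega>)
      \<and> (\<forall>i\<in>Basis. Lp_on \<Omega> 2 (\<lambda>x. G x \<bullet> i)) \<and> weak_grad \<Omega> u G
      \<and> (\<exists>\<phi>s. (\<forall>k. test_fun \<Omega> (\<phi>s k)) \<and>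
           (\<lambda>k. LINT x:\<Omega>|lebesgue. (\<phi>s k x - u x)\<^sup>2 + (norm (grad (\<phi>s k) x - G x))\<^sup>2)
             \<longlonglongrightarrow> 0)"

definition C11_on :: "'a::euclidean_space set \<Rightarrow> ('a \<Rightarrow> real) \<Rightarrow> bool" where
  "C11_on S g \<longleftrightarrow> (\<exists>g' L. (\<forall>x\<in>S. (g has_derivative g' x) (at x within S))
      \<and> (\<forall>x\<in>S. \<forall>y\<in>S. onorm (\<lambda>v. g' x v - g' y v) \<le> L * dist x y))"

text \<open>Boundary of class C^{1,1}: near each boundary point Omega is the supergraph of a
  C^{1,1} function defined on a hyperplane (in some rotated coordinate system).\<close>
definition C11_boundary :: "'a::euclidean_space set \<Rightarrow> bool" where
  "C11_boundary \<Omega> \<longleftrightarrow> (\<forall>x0\<in>frontier \<Omega>. \<exists>r>0. \<exists>e. norm e = 1 \<and>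
      (\<exists>\<gamma>. C11_on {y. y \<bullet> e = 0} \<gamma> \<and>
         \<Omega> \<inter> ball x0 r = {x \<in> ball x0 r. x \<bullet> e > \<gamma> (x - (x \<bullet> e) *\<^sub>R e)}))"

definition ess_supp :: "'a::euclidean_space set \<Rightarrow> ('a \<Rightarrow> real) \<Rightarrow> 'a set" where
  "ess_supp \<Omega> f = \<Omega> - \<Union>{U. open U \<and> U \<subseteq> \<Omega> \<and> (AE x in lebesgue. x \<in> U \<longrightarrow> f x = 0)}"

definition is_solution :: "'a::euclidean_space set \<Rightarrow> ('a \<Rightarrow> real) \<Rightarrow> ('a \<Rightarrow> real) \<Rightarrow>
    ('a \<Rightarrow> real) \<Rightarrow> ('a \<Rightarrow> real) \<Rightarrow> real \<Rightarrow> ('a \<Rightarrow> real) \<Rightarrow> bool" where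
  "is_solution \<Omega> cp cm mu h lam u \<longleftrightarrow> (\<exists>G. H01 \<Omega> u G \<and> Linf_on \<Omega> u \<and>
     (\<forall>\<phi> G\<phi>. H01 \<Omega> \<phi> G\<phi> \<and> Linf_on \<Omega> \<phi> \<longrightarrow>
        (LINT x:\<Omega>|lebesgue. G x \<bullet> G\<phi> x)
        = (LINT x:\<Omega>|lebesgue. ((lam * cp x - cm x) * u x + mu x * (norm (G x))\<^sup>2 + h x) * \<phi> x)))"

end

theory Submission
  imports Defs "HOL-Computational_Algebra.Polynomial"
begin


definition bet :: "real poly \<Rightarrow> real \<Rightarrow> real" where
  "bet p t = (if t > 0 then poly p (inverse t) * exp (- inverse t) else 0)"

definition Tp :: "real poly \<Rightarrow> real poly" where
  "Tp p = [:0,0,1:] * (p - pderiv p)"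

lemma polyexp_lim: "((\<lambda>s::real. poly r s * exp (- s)) \<longlongrightarrow> 0) at_top"
proof -
  have "((\<lambda>s::real. \<Sum>i\<le>degree r. coeff r i * (s ^ i / exp s)) \<longlongrightarrow> (\<Sum>i\<le>degree r. coeff r i * 0)) at_top"
    by (intro tendsto_sum tendsto_mult tendsto_const tendsto_power_div_exp_0)
  moreover have "(\<lambda>s. \<Sum>i\<le>degree r. coeff r i * (s ^ i / exp s)) = (\<lambda>s. poly r s * exp (- s))"
    by (auto simp: poly_altdef sum_distrib_right exp_minus field_simps sum_divide_distrib)
  ultimately show ?thesis by simp
qed

lemma bet_deriv: "(bet p has_real_derivative bet (Tp p) t) (at t)"
proof -
  consider "t > 0" | "t < 0" | "t = 0" by linarith
  then show ?thesis
  proof cases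
    case 1
    let ?f = "\<lambda>t. poly p (inverse t) * exp (- inverse t)"
    have d: "(?f has_real_derivative
        (poly (pderiv p) (inverse t) * (- (inverse t ^ 2)) * exp (- inverse t)
         + poly p (inverse t) * (exp (- inverse t) * (inverse t ^ 2)))) (at t)"
      using 1
      by (auto intro!: derivative_eq_intros DERIV_chain2[OF poly_DERIV] simp: power2_eq_square)
    have e: "bet (Tp p) t = poly (pderiv p) (inverse t) * (- (inverse t ^ 2)) * exp (- inverse t)
         + poly p (inverse t) * (exp (- inverse t) * (inverse t ^ 2))"
      using 1 by (simp add: bet_def Tp_def algebra_simps power2_eq_square)
    show ?thesis unfolding e
      by (rule has_field_derivative_transform_within_open[OF d, of "{0<..}"]) (use 1 in \<open>auto simp: bet_def\<close>)
  next
    case 2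
    have e: "bet (Tp p) t = 0" using 2 by (simp add: bet_def)
    show ?thesis unfolding e
      by (rule has_field_derivative_transform_within_open[OF DERIV_const, of "{..<0}"]) (use 2 in \<open>auto simp: bet_def\<close>)
  next
    case 3
    have e: "bet (Tp p) t = 0" "bet p t = 0" using 3 by (auto simp: bet_def)
    have L: "((\<lambda>y. (bet p y - bet p t) / (y - t)) \<longlongrightarrow> 0) (at_left 0)"
    proof (rule Lim_transform_eventually[OF tendsto_const])
      show "\<forall>\<^sub>F x in at_left 0. 0 = (bet p x - bet p t) / (x - t)"
      proof -
        have "eventually (\<lambda>x::real. x < 0) (at_left 0)" by (simp add: eventually_at_filter)
        then show ?thesis by eventually_elim (use 3 in \<open>auto simp: bet_def\<close>)
      qed
    qed
    have lim: "((\<lambda>s. poly ([:0,1:] * p) s * exp (- s)) \<longlongrightarrow> 0) at_top"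
      by (rule polyexp_lim)
    have Rr: "((\<lambda>y. poly ([:0,1:] * p) (inverse y) * exp (- inverse y)) \<longlongrightarrow> 0) (at_right 0)"
      using filterlim_compose[OF lim filterlim_inverse_at_top_right] by simp
    have R: "((\<lambda>y. (bet p y - bet p t) / (y - t)) \<longlongrightarrow> 0) (at_right 0)"
    proof (rule Lim_transform_eventually[OF Rr])
      show "\<forall>\<^sub>F x in at_right 0. poly ([:0,1:] * p) (inverse x) * exp (- inverse x) = (bet p x - bet p t) / (x - t)"
      proof -
        have "eventually (\<lambda>x::real. x > 0) (at_right 0)" by (simp add: eventually_at_filter)
        then show ?thesis by eventually_elim (use 3 in \<open>auto simp: bet_def field_simps\<close>)
      qed
    qed
    show ?thesis unfolding has_field_derivative_iff e(1) using 3 L R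
      by (auto intro: filterlim_split_at_real)
  qed
qed



inductive_set Af :: "'a::euclidean_space \<Rightarrow> real \<Rightarrow> ('a \<Rightarrow> real) set" for c :: 'a and r :: real where
  Af_const: "(\<lambda>x. k) \<in> Af c r"
| Af_lin: "(\<lambda>x. x \<bullet> v) \<in> Af c r"
| Af_bump: "(\<lambda>x. bet p (r\<^sup>2 - (x - c) \<bullet> (x - c))) \<in> Af c r"
| Af_add: "f \<in> Af c r \<Longrightarrow> g \<in> Af c r \<Longrightarrow> (\<lambda>x. f x + g x) \<in> Af c r"
| Af_mult: "f \<in> Af c r \<Longrightarrow> g \<in> Af c r \<Longrightarrow> (\<lambda>x. f x * g x) \<in> Af c r"

lemma Q_deriv: "((\<lambda>x. r\<^sup>2 - (x - c) \<bullet> (x - c)) has_derivative (\<lambda>u. - (2 * ((x - c) \<bullet> u)))) (at x)"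
  by (auto intro!: derivative_eq_intros simp: inner_commute)

lemma Af_deriv:
  assumes "g \<in> Af c r"
  shows "\<exists>g'. (\<forall>x. (g has_derivative g' x) (at x)) \<and> (\<forall>v. (\<lambda>x. g' x v) \<in> Af c r)"
  using assms
proof induction
  case (Af_const k)
  show ?case by (intro exI[of _ "\<lambda>x u. 0"]) (auto intro: Af.intros)
next
  case (Af_lin v)
  show ?case
    by (intro exI[of _ "\<lambda>x u. u \<bullet> v"]) (auto intro!: derivative_eq_intros Af.intros)
next
  case (Af_bump p)
  let ?Q = "\<lambda>x. r\<^sup>2 - (x - c) \<bullet> (x - c)"
  have d: "((\<lambda>x. bet p (?Q x)) has_derivative (\<lambda>u. bet (Tp p) (?Q x) * (- (2 * ((x - c) \<bullet> u))))) (at x)" for x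
    using has_derivative_compose[OF Q_deriv bet_deriv[unfolded has_field_derivative_def]] by (simp add: mult_ac)
  have m: "(\<lambda>x. bet (Tp p) (?Q x) * (- (2 * ((x - c) \<bullet> v)))) \<in> Af c r" for v
  proof -
    have "(\<lambda>x. bet (Tp p) (?Q x) * (x \<bullet> (- 2 *\<^sub>R v) + 2 * (c \<bullet> v))) \<in> Af c r"
      by (intro Af.Af_mult Af.Af_add Af.Af_bump Af.Af_lin Af.Af_const)
    moreover have "(\<lambda>x. bet (Tp p) (?Q x) * (x \<bullet> (- 2 *\<^sub>R v) + 2 * (c \<bullet> v)))
        = (\<lambda>x. bet (Tp p) (?Q x) * (- (2 * ((x - c) \<bullet> v))))"
      by (auto simp: inner_diff_left algebra_simps)
    ultimately show ?thesis by simp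
  qed
  show ?case
    by (rule exI[of _ "\<lambda>x u. bet (Tp p) (?Q x) * (- (2 * ((x - c) \<bullet> u)))"]) (use d m in auto)
next
  case (Af_add f g)
  then obtain f' g' where f: "\<forall>x. (f has_derivative f' x) (at x)" "\<forall>v. (\<lambda>x. f' x v) \<in> Af c r"
    and g: "\<forall>x. (g has_derivative g' x) (at x)" "\<forall>v. (\<lambda>x. g' x v) \<in> Af c r" by blast
  show ?case
    by (intro exI[of _ "\<lambda>x u. f' x u + g' x u"] conjI allI has_derivative_add Af.Af_add)
       (use f g in auto)
next
  case (Af_mult f g)
  then obtain f' g' where f: "\<forall>x. (f has_derivative f' x) (at x)" "\<forall>v. (\<lambda>x. f' x v) \<in> Af c r"
    and g: "\<forall>x. (g has_derivative g' x) (at x)" "\<forall>v. (\<lambda>x. g' x v) \<in> Af c r" by blast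
  show ?case
    by (intro exI[of _ "\<lambda>x u. f x * g' x u + f' x u * g x"] conjI allI has_derivative_mult Af.Af_add Af.Af_mult)
       (use f g Af_mult.hyps in auto)
qed

lemma Af_smooth:
  assumes "g \<in> Af c r"
  shows "smooth_fun g"
  unfolding smooth_fun_def
proof (intro exI[of _ "Af c r"] conjI ballI allI)
  show "g \<in> Af c r" by fact
next
  fix f x assume "f \<in> Af c r"
  then show "f differentiable at x" using Af_deriv by (metis differentiableI)
next
  fix f v assume "f \<in> Af c r"
  then obtain f' where f: "\<forall>x. (f has_derivative f' x) (at x)" "\<forall>v. (\<lambda>x. f' x v) \<in> Af c r"
    using Af_deriv by blast
  have "(\<lambda>x. frechet_derivative f (at x) v) = (\<lambda>x. f' x v)"
    using f(1) frechet_derivative_at by metis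
  then show "(\<lambda>x. frechet_derivative f (at x) v) \<in> Af c r" using f(2) by simp
qed



lemma line_deriv:
  fixes g :: "'a::euclidean_space \<Rightarrow> real"
  assumes deriv: "\<And>x. (g has_derivative g' x) (at x)"
  shows "((\<lambda>\<tau>. g (x + \<tau> *\<^sub>R v)) has_real_derivative g' (x + z *\<^sub>R v) v) (at z)"
proof -
  have l: "linear (g' (x + z *\<^sub>R v))"
    using deriv has_derivative_linear by blast
  have "((\<lambda>\<tau>. x + \<tau> *\<^sub>R v) has_derivative (\<lambda>\<tau>. \<tau> *\<^sub>R v)) (at z)"
    by (auto intro!: derivative_eq_intros)
  from has_derivative_compose[OF this deriv]
  have "((\<lambda>\<tau>. g (x + \<tau> *\<^sub>R v)) has_derivative (\<lambda>\<tau>. g' (x + z *\<^sub>R v) (\<tau> *\<^sub>R v))) (at z)" .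
  moreover have "(\<lambda>\<tau>. g' (x + z *\<^sub>R v) (\<tau> *\<^sub>R v)) = (\<lambda>\<tau>. \<tau> * g' (x + z *\<^sub>R v) v)"
    using l by (simp add: linear_scale)
  moreover have "(\<lambda>\<tau>. \<tau> * g' (x + z *\<^sub>R v) v) = (*) (g' (x + z *\<^sub>R v) v)"
    by (rule ext) (simp add: mult.commute)
  ultimately show ?thesis
    unfolding has_field_derivative_def by simp
qed

lemma ibp_zero:
  fixes g :: "'a::euclidean_space \<Rightarrow> real"
  assumes deriv: "\<And>x. (g has_derivative g' x) (at x)"
    and cont: "continuous_on UNIV (\<lambda>x. g' x v)"
    and K: "compact K" and zero: "\<And>x. x \<notin> K \<Longrightarrow> g x = 0"
  shows "(LINT x|lborel. g' x v) = 0"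
proof -
  define D where "D x = g' x v" for x
  have gcont: "continuous_on UNIV g"
    using deriv by (meson continuous_at_imp_continuous_on has_derivative_continuous)
  have Dzero: "D x = 0" if "x \<notin> K" for x
  proof -
    have "open (- K)" using K compact_imp_closed by blast
    have "((\<lambda>_. 0) has_derivative (\<lambda>_. 0)) (at x)" by simp
    then have "(g has_derivative (\<lambda>_. 0)) (at x)"
      by (rule has_derivative_transform_within_open[OF _ \<open>open (- K)\<close>]) (use that zero in auto)
    then have "g' x = (\<lambda>_. 0)" using deriv has_derivative_unique by blast
    then show ?thesis by (simp add: D_def)
  qed
  obtain M where M: "\<And>x. \<bar>D x\<bar> \<le> M" "M \<ge> 0"
  proof -
    have "compact (D ` K)"
      using K cont unfolding D_def by (meson compact_continuous_image continuous_on_subset top_greatest)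
    then obtain M0 where "\<And>y. y \<in> D ` K \<Longrightarrow> norm y \<le> M0"
      using compact_imp_bounded bounded_iff by metis
    then have "\<bar>D x\<bar> \<le> max M0 0" for x
      using Dzero by (cases "x \<in> K") (auto simp: le_max_iff_disj)
    then show ?thesis using that by (metis max.cobounded2)
  qed
  obtain B where B: "K \<subseteq> cball 0 B"
  proof -
    obtain a where "\<forall>x\<in>K. norm x \<le> a" using K compact_imp_bounded bounded_iff by metis
    then have "K \<subseteq> cball 0 a" by (auto simp: mem_cball_0)
    then show ?thesis using that by blast
  qed
  define t where "t n = inverse (real (Suc n))" for n
  define s where "s n x = (g (x + t n *\<^sub>R v) - g x) / t n" for n x
  define K' where "K' = cball (0::'a) (B + norm v)"
  have tpos: "t n > 0" "t n \<le> 1" for n unfolding t_def by (auto simp: field_simps)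
  have gmeas: "g \<in> borel_measurable borel"
    using gcont by (rule borel_measurable_continuous_onI)
  have gtmeas: "(\<lambda>x. g (x + c)) \<in> borel_measurable borel" for c
    by (rule borel_measurable_continuous_onI)
       (intro continuous_on_compose2[OF gcont] continuous_intros, auto)
  have Dmeas: "D \<in> borel_measurable borel"
    using cont unfolding D_def by (rule borel_measurable_continuous_onI)
  have smeas: "s n \<in> borel_measurable borel" for n
    unfolding s_def using gmeas gtmeas by measurable
  obtain Mg where Mg: "\<And>x. \<bar>g x\<bar> \<le> Mg"
  proof -
    have "compact (g ` K)"
      using K gcont by (meson compact_continuous_image continuous_on_subset top_greatest)
    then obtain M0 where "\<And>y. y \<in> g ` K \<Longrightarrow> norm y \<le> M0"
      using compact_imp_bounded bounded_iff by metis
    then have "\<bar>g x\<bar> \<le> max M0 0" for x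
      using zero by (cases "x \<in> K") (auto simp: le_max_iff_disj)
    then show ?thesis using that by metis
  qed
  have intK: "integrable lborel (\<lambda>x. C * indicator A x :: real)" if "compact A" for C and A :: "'a set"
  proof -
    have "emeasure lborel A < \<infinity>" using emeasure_bounded_finite[OF compact_imp_bounded[OF that]] .
    moreover have "A \<in> sets lborel" using that by (simp add: compact_imp_closed)
    ultimately show ?thesis by (intro integrable_mult_right integrable_real_indicator)
  qed
  have gint: "integrable lborel g"
  proof (rule Bochner_Integration.integrable_bound[OF intK[OF K, of Mg]])
    show "g \<in> borel_measurable lborel" using gmeas by simp
    show "AE x in lborel. norm (g x) \<le> norm (Mg * indicator K x)"
    proof (rule AE_I2)
      fix x
      show "norm (g x) \<le> norm (Mg * indicator K x)"
      proof (cases "x \<in> K")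
        case True then show ?thesis using Mg[of x] by simp
      next
        case False then show ?thesis using zero by simp
      qed
    qed
  qed
  have transl: "integrable lborel (\<lambda>x. g (x + c)) \<and> (LINT x|lborel. g (x + c)) = (LINT x|lborel. g x)" for c
  proof -
    have m: "(+) c \<in> lborel \<rightarrow>\<^sub>M borel" by simp
    have "integrable lborel (\<lambda>x. g (c + x))"
      using integrable_distr_eq[OF m, of g] gmeas gint by (simp add: lborel_distr_plus)
    moreover have "(LINT x|lborel. g (c + x)) = (LINT x|lborel. g x)"
      using integral_distr[OF m, of g] gmeas by (simp add: lborel_distr_plus)
    ultimately show ?thesis by (simp add: add.commute)
  qed
  have sint0: "(LINT x|lborel. s n x) = 0" for n
  proof -
    have "(LINT x|lborel. s n x) = ((LINT x|lborel. g (x + t n *\<^sub>R v)) - (LINT x|lborel. g x)) / t n"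
      unfolding s_def using transl[of "t n *\<^sub>R v"] gint by simp
    then show ?thesis using transl[of "t n *\<^sub>R v"] by simp
  qed
  have lim: "(\<lambda>n. s n x) \<longlonglongrightarrow> D x" for x
  proof -
    have "((\<lambda>\<tau>. g (x + \<tau> *\<^sub>R v)) has_real_derivative D x) (at 0)"
      using line_deriv[OF deriv, of x v 0] by (simp add: D_def)
    then have l: "((\<lambda>y. (g (x + y *\<^sub>R v) - g x) / y) \<longlongrightarrow> D x) (at 0)"
      unfolding has_field_derivative_iff by simp
    have "filterlim t (at 0) sequentially"
      unfolding filterlim_at
    proof
      show "\<forall>\<^sub>F n in sequentially. t n \<in> UNIV \<and> t n \<noteq> 0"
        using tpos by (auto intro!: always_eventually simp: less_imp_neq[symmetric])
      show "t \<longlonglongrightarrow> 0" unfolding t_def[abs_def] by (rule LIMSEQ_inverse_real_of_nat)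
    qed
    from filterlim_compose[OF l this] show ?thesis by (simp add: s_def o_def)
  qed
  have bound: "\<bar>s n x\<bar> \<le> M * indicator K' x" for n x
  proof (cases "x \<in> K'")
    case True
    obtain z where "z > 0" "z < t n" and z: "g (x + t n *\<^sub>R v) - g (x + 0 *\<^sub>R v) = (t n - 0) * g' (x + z *\<^sub>R v) v"
      using MVT2[of 0 "t n" "\<lambda>\<tau>. g (x + \<tau> *\<^sub>R v)" "\<lambda>z. g' (x + z *\<^sub>R v) v"] tpos[of n]
        line_deriv[OF deriv] by blast
    then have "s n x = D (x + z *\<^sub>R v)" using tpos[of n] by (simp add: s_def D_def)
    then show ?thesis using True M by simp
  next
    case False
    then have "x \<notin> K" using B K'_def
      by (smt (verit, ccfv_SIG) mem_cball_0 norm_ge_zero subset_eq)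
    moreover have "x + t n *\<^sub>R v \<notin> K"
    proof
      assume "x + t n *\<^sub>R v \<in> K"
      then have "norm (x + t n *\<^sub>R v) \<le> B" using B by auto
      moreover have "norm (t n *\<^sub>R v) \<le> norm v" using tpos[of n] by (simp add: mult_left_le_one_le)
      moreover have "norm x \<le> norm (x + t n *\<^sub>R v) + norm (t n *\<^sub>R v)"
        by (metis add_diff_cancel_right' norm_triangle_ineq4)
      ultimately have "norm x \<le> B + norm v" by linarith
      then show False using False K'_def by simp
    qed
    ultimately show ?thesis using zero False by (simp add: s_def)
  qed
  have "(\<lambda>n. LINT x|lborel. s n x) \<longlonglongrightarrow> (LINT x|lborel. D x)"
  proof (rule integral_dominated_convergence[where w="\<lambda>x. M * indicator K' x"])
    show "D \<in> borel_measurable lborel" using Dmeas by simp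
    show "s n \<in> borel_measurable lborel" for n using smeas by simp
    show "integrable lborel (\<lambda>x. M * indicator K' x)" unfolding K'_def by (rule intK) simp
    show "AE x in lborel. (\<lambda>n. s n x) \<longlonglongrightarrow> D x" using lim by simp
    show "AE x in lborel. norm (s n x) \<le> M * indicator K' x" for n using bound by simp
  qed
  then have "(\<lambda>n. 0) \<longlonglongrightarrow> (LINT x|lborel. D x)" using sint0 by simp
  then have "0 = (LINT x|lborel. D x)" by (simp add: LIMSEQ_const_iff)
  then show ?thesis by (simp add: D_def[abs_def])
qed


definition wb :: "'a::euclidean_space \<Rightarrow> real \<Rightarrow> 'a \<Rightarrow> real" where
  "wb c r x = bet 1 (r\<^sup>2 - (x - c) \<bullet> (x - c))"

lemma bet1: "bet 1 t = (if t > 0 then exp (- inverse t) else 0)"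
  by (simp add: bet_def)

lemma betT1: "bet (Tp 1) t = (if t > 0 then (inverse t)\<^sup>2 * exp (- inverse t) else 0)"
  by (simp add: bet_def Tp_def power2_eq_square)

lemma bet1_bounds: "0 \<le> bet 1 t" "bet 1 t \<le> 1"
  by (auto simp: bet1)

lemma betT1_nonneg: "0 \<le> bet (Tp 1) t"
  by (auto simp: betT1)

lemma betT1_sq: "(bet (Tp 1) t)\<^sup>2 \<le> 256 * bet 1 t"
proof (cases "t > 0")
  case True
  define s where "s = inverse t"
  have s: "s > 0" using True by (simp add: s_def)
  have "s / 4 \<le> exp (s / 4)" using exp_ge_add_one_self[of "s/4"] by linarith
  then have "(s / 4) ^ 4 \<le> exp (s / 4) ^ 4" using s by (intro power_mono) auto
  also have "exp (s / 4) ^ 4 = exp s" using exp_of_nat_mult[of 4 "s/4"] by simp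
  finally have a: "s ^ 4 \<le> 256 * exp s" by (simp add: power_divide)
  have "(s\<^sup>2 * exp (- s))\<^sup>2 = s ^ 4 * exp (- s) * exp (- s)"
    by (simp add: power2_eq_square power4_eq_xxxx)
  also have "\<dots> \<le> 256 * exp s * exp (- s) * exp (- s)"
    using a by (intro mult_right_mono) auto
  also have "\<dots> = 256 * exp (- s)" by (simp add: exp_minus)
  finally show ?thesis using True by (simp add: betT1 bet1 s_def)
qed (simp add: betT1 bet1)

lemma betT1_le: "bet (Tp 1) t \<le> 16"
proof -
  have "(bet (Tp 1) t)\<^sup>2 \<le> 16\<^sup>2" using betT1_sq[of t] bet1_bounds(2)[of t] by simp
  then show ?thesis using power2_le_iff_abs_le[of 16 "bet (Tp 1) t"] by simp
qed

lemma wb_in_Af: "wb c r \<in> Af c r"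
  unfolding wb_def[abs_def] by (rule Af.Af_bump)

lemma wb_smooth: "smooth_fun (wb c r)"
  by (rule Af_smooth[OF wb_in_Af])

lemma wb_deriv: "(wb c r has_derivative (\<lambda>u. bet (Tp 1) (r\<^sup>2 - (x - c) \<bullet> (x - c)) * (- (2 * ((x - c) \<bullet> u))))) (at x)"
  unfolding wb_def[abs_def]
  using has_derivative_compose[OF Q_deriv bet_deriv[unfolded has_field_derivative_def]] by (simp add: mult_ac)

lemma wb_fd: "frechet_derivative (wb c r) (at x) u = bet (Tp 1) (r\<^sup>2 - (x - c) \<bullet> (x - c)) * (- (2 * ((x - c) \<bullet> u)))"
  using frechet_derivative_at[OF wb_deriv] by metis

lemma wb_grad: "grad (wb c r) x = (- 2 * bet (Tp 1) (r\<^sup>2 - (x - c) \<bullet> (x - c))) *\<^sub>R (x - c)"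
proof -
  define k where "k = - 2 * bet (Tp 1) (r\<^sup>2 - (x - c) \<bullet> (x - c))"
  have "grad (wb c r) x = (\<Sum>i\<in>Basis. k *\<^sub>R (((x - c) \<bullet> i) *\<^sub>R i))"
    unfolding grad_def wb_fd k_def by (intro sum.cong) (auto simp: algebra_simps)
  also have "\<dots> = k *\<^sub>R (\<Sum>i\<in>Basis. ((x - c) \<bullet> i) *\<^sub>R i)"
    by (rule scaleR_sum_right[symmetric])
  also have "\<dots> = k *\<^sub>R (x - c)"
    by (simp only: euclidean_representation)
  finally show ?thesis by (simp add: k_def)
qed

lemma Q_pos_iff: "r\<^sup>2 - (x - c) \<bullet> (x - c) > 0 \<longleftrightarrow> x \<in> ball c r" if "r > 0" for r :: real
proof -
  have "(x - c) \<bullet> (x - c) = (dist c x)\<^sup>2" by (simp add: dist_norm power2_norm_eq_inner inner_diff_left inner_diff_right inner_commute)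
  moreover have "(dist c x)\<^sup>2 < r\<^sup>2 \<longleftrightarrow> dist c x < r"
    using that power_less_imp_less_base[of "dist c x" 2 r] power_strict_mono[of "dist c x" r 2] by auto
  ultimately show ?thesis by simp
qed

lemma wb_pos_iff: "r > 0 \<Longrightarrow> wb c r x > 0 \<longleftrightarrow> x \<in> ball c r"
  using Q_pos_iff[of r x c] by (simp add: wb_def bet1)

lemma wb_nonneg: "0 \<le> wb c r x" and wb_le1: "wb c r x \<le> 1"
  by (simp_all add: wb_def bet1_bounds)

lemma wb_supp: "r > 0 \<Longrightarrow> {x. wb c r x \<noteq> 0} = ball c r"
  using wb_pos_iff[of r c] wb_nonneg[of c r] by (auto simp: order.strict_iff_order)

lemma wb_zero: "r > 0 \<Longrightarrow> x \<notin> ball c r \<Longrightarrow> wb c r x = 0"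
  using wb_supp[of r c] by auto

lemma wb_test: "r > 0 \<Longrightarrow> cball c r \<subseteq> \<Omega> \<Longrightarrow> test_fun \<Omega> (wb c r)"
  unfolding test_fun_def using wb_smooth[of c r] wb_supp[of r c] closure_ball[of r c] by simp

lemma betT1_zero: "r > 0 \<Longrightarrow> x \<notin> ball c r \<Longrightarrow> bet (Tp 1) (r\<^sup>2 - (x - c) \<bullet> (x - c)) = 0"
  using Q_pos_iff[of r x c] by (simp add: betT1)

lemma grad_wb_bound: "r > 0 \<Longrightarrow> norm (grad (wb c r) x) \<le> 32 * r"
proof (cases "x \<in> ball c r")
  case True
  assume r: "r > 0"
  have "norm (grad (wb c r) x) = 2 * bet (Tp 1) (r\<^sup>2 - (x - c) \<bullet> (x - c)) * norm (x - c)"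
    by (simp add: wb_grad betT1_nonneg)
  also have "\<dots> \<le> 2 * 16 * r"
    using True betT1_le betT1_nonneg
    by (intro mult_mono) (auto simp: dist_norm norm_minus_commute)
  finally show ?thesis by simp
qed (simp add: wb_grad betT1_zero)

lemma grad_wb_key:
  assumes r: "r > 0" and m: "m > 0"
  shows "\<bar>g \<bullet> grad (wb c r) x\<bar> \<le> m * (norm g)\<^sup>2 * wb c r x + 256 * r\<^sup>2 / m"
proof (cases "x \<in> ball c r")
  case False
  then show ?thesis using r m by (simp add: wb_grad betT1_zero wb_nonneg)
next
  case True
  define b where "b = bet (Tp 1) (r\<^sup>2 - (x - c) \<bullet> (x - c))"
  define B where "B = wb c r x"
  define a where "a = norm g"
  have b: "b \<ge> 0" "b\<^sup>2 \<le> 256 * B" unfolding b_def B_def wb_def by (simp_all add: betT1_nonneg betT1_sq)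
  have a: "a \<ge> 0" by (simp add: a_def)
  have xc: "norm (x - c) \<le> r" using True by (simp add: dist_norm norm_minus_commute)
  have "\<bar>g \<bullet> grad (wb c r) x\<bar> \<le> a * norm (grad (wb c r) x)"
    unfolding a_def by (rule Cauchy_Schwarz_ineq2)
  also have "norm (grad (wb c r) x) = 2 * b * norm (x - c)"
    by (simp add: wb_grad b_def betT1_nonneg)
  also have "a * (2 * b * norm (x - c)) \<le> a * (2 * b * r)"
    using a b xc by (intro mult_left_mono) auto
  also have "a * (2 * b * r) \<le> (m / 256) * a\<^sup>2 * b\<^sup>2 + 256 * r\<^sup>2 / m"
  proof -
    have "0 \<le> (m / 256 * a * b - r)\<^sup>2 * (256 / m)" using m by simp
    also have "(m / 256 * a * b - r)\<^sup>2 * (256 / m) = (m / 256) * a\<^sup>2 * b\<^sup>2 + 256 * r\<^sup>2 / m - a * (2 * b * r)"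
      using m by (simp add: power2_eq_square field_simps)
    finally show ?thesis by simp
  qed
  also have "(m / 256) * a\<^sup>2 * b\<^sup>2 \<le> (m / 256) * a\<^sup>2 * (256 * B)"
    using b m by (intro mult_left_mono) auto
  finally show ?thesis by (simp add: a_def B_def)
qed



lemma smooth_props:
  assumes "smooth_fun f"
  shows "\<And>x. (f has_derivative frechet_derivative f (at x)) (at x)"
    and "continuous_on UNIV f"
    and "\<And>v. continuous_on UNIV (\<lambda>x. frechet_derivative f (at x) v)"
proof -
  obtain F where F: "f \<in> F" "\<And>g. g \<in> F \<Longrightarrow> (\<forall>x. g differentiable (at x)) \<and> (\<forall>v. (\<lambda>x. frechet_derivative g (at x) v) \<in> F)"
    using assms unfolding smooth_fun_def by blast
  show d: "(f has_derivative frechet_derivative f (at x)) (at x)" for x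
    using F frechet_derivative_works by blast
  show "continuous_on UNIV f"
    using F by (meson continuous_at_imp_continuous_on differentiable_imp_continuous_within)
  show "continuous_on UNIV (\<lambda>x. frechet_derivative f (at x) v)" for v
  proof -
    have "(\<lambda>x. frechet_derivative f (at x) v) \<in> F" using F by blast
    then show ?thesis
      using F by (meson continuous_at_imp_continuous_on differentiable_imp_continuous_within)
  qed
qed

lemma loc0_deriv:
  assumes "closed K" "\<And>y. y \<notin> K \<Longrightarrow> f y = 0" "x \<notin> K" "(f has_derivative D) (at x)"
  shows "D = (\<lambda>_. 0)"
proof -
  have "open (- K)" using assms(1) by auto
  have "((\<lambda>_. 0) has_derivative (\<lambda>_. 0)) (at x)" by simp
  then have "(f has_derivative (\<lambda>_. 0)) (at x)"
    by (rule has_derivative_transform_within_open[OF _ \<open>open (- K)\<close>]) (use assms in auto)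
  then show ?thesis using assms(4) has_derivative_unique by blast
qed

lemma cont_int:
  fixes f :: "'a::euclidean_space \<Rightarrow> real"
  assumes "bounded \<Omega>" "open \<Omega>" "continuous_on UNIV f"
  shows "integrable (lebesgue_on \<Omega>) f"
proof -
  have L: "\<Omega> \<in> lmeasurable" using assms lmeasurable_open by blast
  interpret finite_measure "lebesgue_on \<Omega>" using finite_measure_lebesgue_on[OF L] .
  have "compact (f ` closure \<Omega>)"
    using assms by (meson compact_closure compact_continuous_image continuous_on_subset top_greatest)
  then obtain B where B: "\<And>y. y \<in> f ` closure \<Omega> \<Longrightarrow> norm y \<le> B"
    using compact_imp_bounded bounded_iff by metis
  show ?thesis
  proof (rule integrable_const_bound[where B=B])
    show "AE x in lebesgue_on \<Omega>. norm (f x) \<le> B"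
      by (rule AE_I2) (use B closure_subset in auto)
    show "f \<in> borel_measurable (lebesgue_on \<Omega>)"
      using assms by (intro continuous_imp_measurable_on_sets_lebesgue)
        (auto intro: continuous_on_subset simp: L fmeasurableD)
  qed
qed

lemma set_int_eq:
  fixes f :: "'a::euclidean_space \<Rightarrow> real"
  assumes "\<Omega> \<in> sets lebesgue"
  shows "(LINT x:\<Omega>|lebesgue. f x) = integral\<^sup>L (lebesgue_on \<Omega>) f"
  unfolding set_lebesgue_integral_def
  using integral_restrict_space[of \<Omega> lebesgue f] assms by simp

lemma grad_inner:
  assumes "i \<in> Basis"
  shows "grad f x \<bullet> i = frechet_derivative f (at x) i"
proof -
  have "grad f x \<bullet> i = (\<Sum>j\<in>Basis. frechet_derivative f (at x) j * (j \<bullet> i))"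
    by (simp add: grad_def inner_sum_left)
  also have "\<dots> = (\<Sum>j\<in>Basis. if j = i then frechet_derivative f (at x) i else 0)"
    using assms by (intro sum.cong) (auto simp: inner_Basis)
  also have "\<dots> = frechet_derivative f (at x) i" using assms by simp
  finally show ?thesis .
qed



lemma abs_powr2: "\<bar>y::real\<bar> powr 2 = y\<^sup>2"
  by (cases "y = 0") (simp_all add: powr_numeral)

lemma Lp2_cont:
  fixes f :: "'a::euclidean_space \<Rightarrow> real"
  assumes "bounded \<Omega>" "open \<Omega>" "continuous_on UNIV f"
  shows "Lp_on \<Omega> 2 f"
proof -
  have L: "\<Omega> \<in> sets lebesgue" using assms lmeasurable_open fmeasurableD by blast
  have "continuous_on UNIV (\<lambda>x. (f x)\<^sup>2)" using assms(3) by (intro continuous_intros)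
  then have "integrable (lebesgue_on \<Omega>) (\<lambda>x. (f x)\<^sup>2)" using assms cont_int by blast
  moreover have "f \<in> borel_measurable (lebesgue_on \<Omega>)"
    using assms L by (intro continuous_imp_measurable_on_sets_lebesgue) (auto intro: continuous_on_subset)
  ultimately show ?thesis unfolding Lp_on_def abs_powr2 by simp
qed

lemma smooth_ibp:
  fixes \<Omega> :: "'a::euclidean_space set"
  assumes o: "open \<Omega>" and b: "bounded \<Omega>" and f: "smooth_fun f" and \<psi>: "test_fun \<Omega> \<psi>" and i: "i \<in> Basis"
  shows "(LINT x:\<Omega>|lebesgue. f x * frechet_derivative \<psi> (at x) i)
      = - (LINT x:\<Omega>|lebesgue. (grad f x \<bullet> i) * \<psi> x)"
proof -
  have L: "\<Omega> \<in> sets lebesgue" using o b lmeasurable_open fmeasurableD by blast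
  define K where "K = closure {x. \<psi> x \<noteq> 0}"
  have K: "compact K" "K \<subseteq> \<Omega>" using \<psi> unfolding test_fun_def K_def by auto
  have sm: "smooth_fun \<psi>" using \<psi> unfolding test_fun_def by auto
  note f1 = smooth_props[OF f] and p1 = smooth_props[OF sm]
  have \<psi>0: "\<psi> x = 0" if "x \<notin> K" for x
  proof (rule ccontr)
    assume "\<psi> x \<noteq> 0"
    then have "x \<in> {x. \<psi> x \<noteq> 0}" by simp
    then have "x \<in> K" unfolding K_def using closure_subset by (rule subsetD[rotated])
    then show False using that by simp
  qed
  have \<psi>'0: "frechet_derivative \<psi> (at x) i = 0" if "x \<notin> K" for x
    using loc0_deriv[OF compact_imp_closed[OF K(1)] \<psi>0 that p1(1)] by simp
  define g' where "g' x u = f x * frechet_derivative \<psi> (at x) u + frechet_derivative f (at x) u * \<psi> x" for x u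
  have gd: "((\<lambda>x. f x * \<psi> x) has_derivative g' x) (at x)" for x
    unfolding g'_def[abs_def] by (rule has_derivative_mult[OF f1(1) p1(1)])
  have c1: "continuous_on UNIV (\<lambda>x. f x * frechet_derivative \<psi> (at x) i)"
    by (rule continuous_on_mult[OF f1(2) p1(3)])
  have c2: "continuous_on UNIV (\<lambda>x. frechet_derivative f (at x) i * \<psi> x)"
    by (rule continuous_on_mult[OF f1(3) p1(2)])
  have gc: "continuous_on UNIV (\<lambda>x. g' x i)"
    unfolding g'_def by (rule continuous_on_add[OF c1 c2])
  have z: "(LINT x|lborel. g' x i) = 0"
    by (rule ibp_zero[OF gd gc K(1)]) (use \<psi>0 in simp)
  have i1: "integrable (lebesgue_on \<Omega>) (\<lambda>x. f x * frechet_derivative \<psi> (at x) i)"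
    by (rule cont_int[OF b o c1])
  have i2: "integrable (lebesgue_on \<Omega>) (\<lambda>x. frechet_derivative f (at x) i * \<psi> x)"
    by (rule cont_int[OF b o c2])
  have "integral\<^sup>L (lebesgue_on \<Omega>) (\<lambda>x. f x * frechet_derivative \<psi> (at x) i)
      + integral\<^sup>L (lebesgue_on \<Omega>) (\<lambda>x. frechet_derivative f (at x) i * \<psi> x)
      = integral\<^sup>L (lebesgue_on \<Omega>) (\<lambda>x. g' x i)"
    unfolding g'_def by (rule Bochner_Integration.integral_add[OF i1 i2, symmetric])
  also have "\<dots> = (LINT x|lebesgue. indicator \<Omega> x *\<^sub>R g' x i)"
    using integral_restrict_space[of \<Omega> lebesgue "\<lambda>x. g' x i"] L by simp
  also have "\<dots> = (LINT x|lebesgue. g' x i)"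
  proof (rule Bochner_Integration.integral_cong[OF refl])
    fix x show "indicator \<Omega> x *\<^sub>R g' x i = g' x i"
    proof (cases "x \<in> \<Omega>")
      case False
      then have "x \<notin> K" using K(2) by auto
      then show ?thesis using False by (simp add: g'_def \<psi>0 \<psi>'0)
    qed simp
  qed
  also have "\<dots> = (LINT x|lborel. g' x i)"
    by (rule integral_completion) (use borel_measurable_continuous_onI[OF gc] in simp)
  finally have "integral\<^sup>L (lebesgue_on \<Omega>) (\<lambda>x. f x * frechet_derivative \<psi> (at x) i)
      = - integral\<^sup>L (lebesgue_on \<Omega>) (\<lambda>x. frechet_derivative f (at x) i * \<psi> x)"
    using z by simp
  then show ?thesis
    using L by (simp add: set_int_eq grad_inner[OF i])
qed

lemma wb_H01:
  fixes \<Omega> :: "'a::euclidean_space set"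
  assumes r: "r > 0" and sub: "cball c r \<subseteq> \<Omega>" and o: "open \<Omega>" and b: "bounded \<Omega>"
  shows "H01 \<Omega> (wb c r) (grad (wb c r))" and "Linf_on \<Omega> (wb c r)"
proof -
  have L: "\<Omega> \<in> sets lebesgue" using o b lmeasurable_open fmeasurableD by blast
  note w1 = smooth_props[OF wb_smooth[of c r]]
  have gc: "continuous_on UNIV (grad (wb c r))"
    unfolding grad_def[abs_def] by (intro continuous_intros w1)
  have wm: "wb c r \<in> borel_measurable (lebesgue_on \<Omega>)"
    using w1 L by (intro continuous_imp_measurable_on_sets_lebesgue) (auto intro: continuous_on_subset)
  have gm: "grad (wb c r) \<in> borel_measurable (lebesgue_on \<Omega>)"
    using gc L by (intro continuous_imp_measurable_on_sets_lebesgue) (auto intro: continuous_on_subset)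
  have "\<bar>wb c r x\<bar> \<le> 1" for x using wb_nonneg[of c r x] wb_le1[of c r x] by simp
  then show "Linf_on \<Omega> (wb c r)"
    unfolding Linf_on_def using wm by (auto intro!: exI[of _ 1] AE_I2)
  show "H01 \<Omega> (wb c r) (grad (wb c r))"
    unfolding H01_def
  proof (intro conjI ballI)
    show "Lp_on \<Omega> 2 (wb c r)" using Lp2_cont[OF b o w1(2)] .
    show "grad (wb c r) \<in> borel_measurable (lebesgue_on \<Omega>)" by (rule gm)
    show "Lp_on \<Omega> 2 (\<lambda>x. grad (wb c r) x \<bullet> i)" for i
      by (rule Lp2_cont[OF b o]) (rule continuous_on_inner[OF gc continuous_on_const])
    show "weak_grad \<Omega> (wb c r) (grad (wb c r))"
      unfolding weak_grad_def
    proof (intro allI impI ballI)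
      fix \<phi> i assume "test_fun \<Omega> \<phi>" "i \<in> (Basis :: 'a set)"
      then show "(LINT x:\<Omega>|lebesgue. wb c r x * frechet_derivative \<phi> (at x) i)
          = - (LINT x:\<Omega>|lebesgue. (grad (wb c r) x \<bullet> i) * \<phi> x)"
        by (rule smooth_ibp[OF o b wb_smooth])
    qed
    show "\<exists>\<phi>s. (\<forall>k. test_fun \<Omega> (\<phi>s k)) \<and>
      (\<lambda>k. LINT x:\<Omega>|lebesgue. (\<phi>s k x - wb c r x)\<^sup>2 + (norm (grad (\<phi>s k) x - grad (wb c r) x))\<^sup>2)
        \<longlonglongrightarrow> 0"
    proof (rule exI[of _ "\<lambda>k. wb c r"], intro conjI allI)
      show "test_fun \<Omega> (wb c r)" for k :: nat by (rule wb_test[OF r sub])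
      have "(\<lambda>k::nat. LINT x:\<Omega>|lebesgue. (wb c r x - wb c r x)\<^sup>2 + (norm (grad (wb c r) x - grad (wb c r) x))\<^sup>2) = (\<lambda>k. 0)"
        by simp
      then show "(\<lambda>k::nat. LINT x:\<Omega>|lebesgue. (wb c r x - wb c r x)\<^sup>2 + (norm (grad (wb c r) x - grad (wb c r) x))\<^sup>2) \<longlonglongrightarrow> 0"
        by (simp only: tendsto_const)
    qed
  qed
qed



lemma Lq_int:
  fixes f :: "'a::euclidean_space \<Rightarrow> real"
  assumes q: "q \<ge> 1" and f: "Lp_on \<Omega> q f" and L: "\<Omega> \<in> lmeasurable"
  shows "integrable (lebesgue_on \<Omega>) f"
proof -
  interpret finite_measure "lebesgue_on \<Omega>" using finite_measure_lebesgue_on[OF L] .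
  have m: "f \<in> borel_measurable (lebesgue_on \<Omega>)" and i: "integrable (lebesgue_on \<Omega>) (\<lambda>x. \<bar>f x\<bar> powr q)"
    using f unfolding Lp_on_def by auto
  have i2: "integrable (lebesgue_on \<Omega>) (\<lambda>x. 1 + \<bar>f x\<bar> powr q)"
    using i by simp
  have b: "\<bar>f x\<bar> \<le> 1 + \<bar>f x\<bar> powr q" for x
  proof (cases "\<bar>f x\<bar> \<le> 1")
    case False
    then have "\<bar>f x\<bar> powr 1 \<le> \<bar>f x\<bar> powr q" using q by (intro powr_mono) auto
    then show ?thesis using False by simp
  qed (simp add: add_increasing2)
  show ?thesis
    by (rule Bochner_Integration.integrable_bound[OF i2 m]) (rule AE_I2, use b in \<open>auto intro: order_trans\<close>)
qed

lemma Linf_int: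
  fixes f :: "'a::euclidean_space \<Rightarrow> real"
  assumes f: "Linf_on \<Omega> f" and L: "\<Omega> \<in> lmeasurable"
  shows "integrable (lebesgue_on \<Omega>) f" and "\<exists>C. AE x in lebesgue_on \<Omega>. \<bar>f x\<bar> \<le> C"
proof -
  interpret finite_measure "lebesgue_on \<Omega>" using finite_measure_lebesgue_on[OF L] .
  have L': "\<Omega> \<in> sets lebesgue" using L fmeasurableD by blast
  obtain C where m: "f \<in> borel_measurable (lebesgue_on \<Omega>)" and C: "AE x in lebesgue. x \<in> \<Omega> \<longrightarrow> \<bar>f x\<bar> \<le> C"
    using f unfolding Linf_on_def by auto
  have C': "AE x in lebesgue_on \<Omega>. \<bar>f x\<bar> \<le> C"
    using C AE_restrict_space_iff[of \<Omega> lebesgue] L' by simp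
  then show "\<exists>C. AE x in lebesgue_on \<Omega>. \<bar>f x\<bar> \<le> C" by blast
  show "integrable (lebesgue_on \<Omega>) f"
    by (rule integrable_const_bound[OF _ m, of C]) (use C' in simp)
qed



theorem lemma5p1:
  fixes \<Omega> :: "'a::euclidean_space set"
    and cp cm mu h u0 :: "'a \<Rightarrow> real"
    and q \<epsilon> \<mu>1 R :: real and xbar :: 'a
  assumes dim: "DIM('a) \<ge> 2"
    and dom: "open \<Omega>" "connected \<Omega>" "bounded \<Omega>" "\<Omega> \<noteq> {}"
    and bdry: "C11_boundary \<Omega>"
    and q: "q > real DIM('a) / 2"
    and cp_L: "Lp_on \<Omega> q cp" and cm_L: "Lp_on \<Omega> q cm"
    and hp_L: "Lp_on \<Omega> q (\<lambda>x. max (h x) 0)"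
    and mu_L: "Linf_on \<Omega> mu" and hm_L: "Linf_on \<Omega> (\<lambda>x. max (- h x) 0)"
    and cp_nn: "AE x in lebesgue. x \<in> \<Omega> \<longrightarrow> cp x \<ge> 0"
    and cm_nn: "AE x in lebesgue. x \<in> \<Omega> \<longrightarrow> cm x \<ge> 0"
    and cpcm: "AE x in lebesgue. x \<in> \<Omega> \<longrightarrow> cp x * cm x = 0"
    and Op: "emeasure lebesgue (ess_supp \<Omega> cp) > 0"
    and eps: "\<epsilon> > 0" and mu1: "\<mu>1 > 0"
    and mu_ge: "AE x in lebesgue. x \<in> \<Omega> \<longrightarrow> mu x \<ge> \<mu>1"
    and cm_zero: "AE x in lebesgue. x \<in> {y \<in> \<Omega>. infdist y (ess_supp \<Omega> cp) < \<epsilon>} \<longrightarrow> cm x = 0"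
    and u0: "is_solution \<Omega> cp cm mu h 0 u0"
    and xbar: "xbar \<in> \<Omega>" and R: "R > 0" and ball: "ball xbar R \<subseteq> \<Omega>"
    and cpu0_ge: "AE x in lebesgue. x \<in> ball xbar R \<longrightarrow> cp x * u0 x \<ge> 0"
    and cpu0_pos: "emeasure lebesgue {x \<in> ball xbar R. cp x * u0 x > 0} > 0"
    and cm_ball: "AE x in lebesgue. x \<in> ball xbar R \<longrightarrow> cm x = 0"
    and mu_ball: "AE x in lebesgue. x \<in> ball xbar R \<longrightarrow> mu x \<ge> 0"
  shows "\<exists>\<Lambda>>0. \<forall>lam\<ge>\<Lambda>. \<not> (\<exists>u. is_solution \<Omega> cp cm mu h lam u
            \<and> (AE x in lebesgue. x \<in> ball xbar R \<longrightarrow> u x \<ge> u0 x))"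
proof -
  have Lm: "\<Omega> \<in> lmeasurable" using dom lmeasurable_open by blast
  have L: "\<Omega> \<in> sets lebesgue" using Lm fmeasurableD by blast
  interpret FM: finite_measure "lebesgue_on \<Omega>" using finite_measure_lebesgue_on[OF Lm] .
  have AEiff: "(AE x in lebesgue_on \<Omega>. P x) \<longleftrightarrow> (AE x in lebesgue. x \<in> \<Omega> \<longrightarrow> P x)" for P
    using AE_restrict_space_iff[of \<Omega> lebesgue P] L by simp
  have q1: "q \<ge> 1" using q dim by (simp add: field_simps)
  obtain r where r: "0 < r" "r < R"
    and P: "\<not> (AE x in lebesgue. x \<in> ball xbar r \<longrightarrow> \<not> cp x * u0 x > 0)"
  proof -
    define rn where "rn n = R - R * inverse (real (Suc (Suc n)))" for n
    have rn: "0 < rn n" "rn n < R" for n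
      using R by (auto simp: rn_def field_simps add_pos_nonneg)
    have "\<exists>n. \<not> (AE x in lebesgue. x \<in> ball xbar (rn n) \<longrightarrow> \<not> cp x * u0 x > 0)"
    proof (rule ccontr)
      assume "\<nexists>n. \<not> (AE x in lebesgue. x \<in> ball xbar (rn n) \<longrightarrow> \<not> cp x * u0 x > 0)"
      then have "AE x in lebesgue. \<forall>n. x \<in> ball xbar (rn n) \<longrightarrow> \<not> cp x * u0 x > 0"
        by (subst AE_all_countable) blast
      then have "AE x in lebesgue. x \<in> ball xbar R \<longrightarrow> \<not> cp x * u0 x > 0"
      proof eventually_elim
        case (elim x)
        show ?case
        proof
          assume x: "x \<in> ball xbar R"
          then have "0 < (R - dist xbar x) / R" using R by simp
          then obtain m where m: "m > 0" "inverse (real m) < (R - dist xbar x) / R"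
            using ex_inverse_of_nat_less by blast
          have "inverse (real (Suc (Suc (m - 1)))) \<le> inverse (real m)"
            using m(1) by (simp add: field_simps)
          then have "inverse (real (Suc (Suc (m - 1)))) < (R - dist xbar x) / R" using m(2) by linarith
          then have "R * inverse (real (Suc (Suc (m - 1)))) < R - dist xbar x"
            using R by (simp add: field_simps)
          then have "x \<in> ball xbar (rn (m - 1))"
            by (simp add: rn_def)
          then show "\<not> cp x * u0 x > 0" using elim by blast
        qed
      qed
      then obtain N where N: "{x \<in> space lebesgue. \<not> (x \<in> ball xbar R \<longrightarrow> \<not> cp x * u0 x > 0)} \<subseteq> N"
        "emeasure lebesgue N = 0" "N \<in> sets lebesgue"
        by (rule AE_E)
      have "emeasure lebesgue {x \<in> ball xbar R. cp x * u0 x > 0} \<le> emeasure lebesgue N"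
        by (rule emeasure_mono) (use N in auto)
      then show False using cpu0_pos N(2) by simp
    qed
    then obtain n where "\<not> (AE x in lebesgue. x \<in> ball xbar (rn n) \<longrightarrow> \<not> cp x * u0 x > 0)" by blast
    then show ?thesis using that rn by blast
  qed
  define w where "w = wb xbar r"
  have cb: "cball xbar r \<subseteq> \<Omega>"
    using ball r by (auto simp: subset_eq)
  have wH: "H01 \<Omega> w (grad w)" "Linf_on \<Omega> w"
    unfolding w_def using wb_H01[OF r(1) cb dom(1) dom(3)] by auto
  have w0: "0 \<le> w x" "w x \<le> 1" for x unfolding w_def by (simp_all add: wb_nonneg wb_le1)
  have wz: "x \<notin> ball xbar r \<Longrightarrow> w x = 0" for x unfolding w_def using wb_zero r by blast
  have wp: "x \<in> ball xbar r \<Longrightarrow> w x > 0" for x unfolding w_def using wb_pos_iff r by blast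
  have wzR: "x \<notin> ball xbar R \<Longrightarrow> w x = 0" for x using wz r by auto
  have wm: "w \<in> borel_measurable (lebesgue_on \<Omega>)" using wH unfolding Linf_on_def by blast
  have gwm: "grad w \<in> borel_measurable (lebesgue_on \<Omega>)" using wH unfolding H01_def by blast
  define K where "K = 256 * r\<^sup>2 / \<mu>1"
  have key: "\<bar>g \<bullet> grad w x\<bar> \<le> \<mu>1 * (norm g)\<^sup>2 * w x + K" for g x
    unfolding w_def K_def by (rule grad_wb_key[OF r(1) mu1])
  have cpm: "cp \<in> borel_measurable (lebesgue_on \<Omega>)" using cp_L unfolding Lp_on_def by blast
  have cmm: "cm \<in> borel_measurable (lebesgue_on \<Omega>)" using cm_L unfolding Lp_on_def by blast
  have cpi: "integrable (lebesgue_on \<Omega>) cp" by (rule Lq_int[OF q1 cp_L Lm])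
  have hpi: "integrable (lebesgue_on \<Omega>) (\<lambda>x. max (h x) 0)" by (rule Lq_int[OF q1 hp_L Lm])
  have hmi: "integrable (lebesgue_on \<Omega>) (\<lambda>x. max (- h x) 0)" by (rule Linf_int(1)[OF hm_L Lm])
  have heq: "(\<lambda>x. max (h x) 0 - max (- h x) 0) = h" by (auto simp: max_def)
  have hi: "integrable (lebesgue_on \<Omega>) h"
    using Bochner_Integration.integrable_diff[OF hpi hmi] unfolding heq .
  have hm: "h \<in> borel_measurable (lebesgue_on \<Omega>)" using hi by (rule borel_measurable_integrable)
  have mum: "mu \<in> borel_measurable (lebesgue_on \<Omega>)" using mu_L unfolding Linf_on_def by blast
  obtain Cmu where Cmu: "AE x in lebesgue_on \<Omega>. \<bar>mu x\<bar> \<le> Cmu" using Linf_int(2)[OF mu_L Lm] by blast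
  obtain G0 where u0L: "Linf_on \<Omega> u0" using u0 unfolding is_solution_def by blast
  have u0m: "u0 \<in> borel_measurable (lebesgue_on \<Omega>)" using u0L unfolding Linf_on_def by blast
  obtain Cu0 where Cu0: "AE x in lebesgue_on \<Omega>. \<bar>u0 x\<bar> \<le> Cu0" using Linf_int(2)[OF u0L Lm] by blast
  have cpnn: "AE x in lebesgue_on \<Omega>. cp x \<ge> 0" using cp_nn AEiff by simp
  have muge: "AE x in lebesgue_on \<Omega>. mu x \<ge> \<mu>1" using mu_ge AEiff by simp
  have cmball: "AE x in lebesgue_on \<Omega>. x \<in> ball xbar R \<longrightarrow> cm x = 0" unfolding AEiff using cm_ball by eventually_elim auto
  have cpu0ge: "AE x in lebesgue_on \<Omega>. x \<in> ball xbar R \<longrightarrow> cp x * u0 x \<ge> 0" unfolding AEiff using cpu0_ge by eventually_elim auto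
  have cpwint: "integrable (lebesgue_on \<Omega>) (\<lambda>x. cp x * v x * w x)"
    if vm: "v \<in> borel_measurable (lebesgue_on \<Omega>)" and vC: "AE x in lebesgue_on \<Omega>. \<bar>v x\<bar> \<le> C" for v C
  proof (rule Bochner_Integration.integrable_bound[of _ "\<lambda>x. C * cp x"])
    show "integrable (lebesgue_on \<Omega>) (\<lambda>x. C * cp x)" using cpi by simp
    show "(\<lambda>x. cp x * v x * w x) \<in> borel_measurable (lebesgue_on \<Omega>)" using cpm vm wm by measurable
    show "AE x in lebesgue_on \<Omega>. norm (cp x * v x * w x) \<le> norm (C * cp x)"
      using vC
    proof eventually_elim
      case (elim x)
      have "\<bar>cp x * v x * w x\<bar> = \<bar>cp x\<bar> * \<bar>v x\<bar> * w x" using w0[of x] by (simp add: abs_mult)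
      also have "\<dots> \<le> \<bar>cp x\<bar> * \<bar>v x\<bar> * 1" using w0[of x] by (intro mult_left_mono) auto
      also have "\<dots> \<le> \<bar>cp x\<bar> * C" using elim by (simp add: mult_left_mono)
      also have "\<dots> \<le> \<bar>cp x\<bar> * \<bar>C\<bar>" by (rule mult_left_mono) auto
      also have "\<dots> = \<bar>C * cp x\<bar>" by (simp add: abs_mult)
      finally show ?case by simp
    qed
  qed
  define a where "a = integral\<^sup>L (lebesgue_on \<Omega>) (\<lambda>x. cp x * u0 x * w x)"
  have ai: "integrable (lebesgue_on \<Omega>) (\<lambda>x. cp x * u0 x * w x)" by (rule cpwint[OF u0m Cu0])
  have ann: "AE x in lebesgue_on \<Omega>. 0 \<le> cp x * u0 x * w x"
    using cpu0ge
  proof eventually_elim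
    case (elim x)
    show ?case
    proof (cases "x \<in> ball xbar R")
      case True then show ?thesis using elim w0[of x] by simp
    next
      case False then show ?thesis using wzR by simp
    qed
  qed
  have apos: "a > 0"
  proof -
    have "a \<ge> 0" unfolding a_def using ann by (rule integral_nonneg_AE)
    moreover have "a \<noteq> 0"
    proof
      assume "a = 0"
      then have "AE x in lebesgue_on \<Omega>. cp x * u0 x * w x = 0"
        using integral_nonneg_eq_0_iff_AE[OF ai ann] unfolding a_def by simp
      then have "AE x in lebesgue. x \<in> \<Omega> \<longrightarrow> cp x * u0 x * w x = 0" using AEiff by simp
      then have "AE x in lebesgue. x \<in> ball xbar r \<longrightarrow> \<not> cp x * u0 x > 0"
      proof eventually_elim
        case (elim x)
        show ?case
        proof
          assume x: "x \<in> ball xbar r"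
          then have "x \<in> \<Omega>" using cb by auto
          then have "cp x * u0 x * w x = 0" using elim by simp
          then show "\<not> cp x * u0 x > 0" using wp[OF x] by auto
        qed
      qed
      then show False using P by simp
    qed
    ultimately show ?thesis by simp
  qed
  define mO where "mO = measure (lebesgue_on \<Omega>) (space (lebesgue_on \<Omega>))"
  have hwi: "integrable (lebesgue_on \<Omega>) (\<lambda>x. h x * w x)"
  proof (rule Bochner_Integration.integrable_bound[of _ h])
    show "integrable (lebesgue_on \<Omega>) h" by (rule hi)
    show "(\<lambda>x. h x * w x) \<in> borel_measurable (lebesgue_on \<Omega>)" using hm wm by measurable
    show "AE x in lebesgue_on \<Omega>. norm (h x * w x) \<le> norm (h x)"
      by (rule AE_I2) (use w0 in \<open>auto simp: abs_mult intro: mult_left_le\<close>)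
  qed
  define hw where "hw = integral\<^sup>L (lebesgue_on \<Omega>) (\<lambda>x. h x * w x)"
  define \<Lambda> where "\<Lambda> = max 1 ((K * mO - hw) / a + 1)"
  show ?thesis
  proof (intro exI[of _ \<Lambda>] conjI allI impI notI)
    show "\<Lambda> > 0" unfolding \<Lambda>_def by simp
  next
    fix lam assume lam: "\<Lambda> \<le> lam"
    assume "\<exists>u. is_solution \<Omega> cp cm mu h lam u \<and> (AE x in lebesgue. x \<in> ball xbar R \<longrightarrow> u0 x \<le> u x)"
    then obtain u G where uH: "H01 \<Omega> u G" and uL: "Linf_on \<Omega> u"
      and weak: "\<And>\<phi> G\<phi>. H01 \<Omega> \<phi> G\<phi> \<and> Linf_on \<Omega> \<phi> \<Longrightarrow>
        (LINT x:\<Omega>|lebesgue. G x \<bullet> G\<phi> x)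
        = (LINT x:\<Omega>|lebesgue. ((lam * cp x - cm x) * u x + mu x * (norm (G x))\<^sup>2 + h x) * \<phi> x)"
      and uge: "AE x in lebesgue. x \<in> ball xbar R \<longrightarrow> u0 x \<le> u x"
      unfolding is_solution_def by blast
    have lam0: "lam > 0" using lam unfolding \<Lambda>_def by linarith
    have E: "integral\<^sup>L (lebesgue_on \<Omega>) (\<lambda>x. G x \<bullet> grad w x)
        = integral\<^sup>L (lebesgue_on \<Omega>) (\<lambda>x. ((lam * cp x - cm x) * u x + mu x * (norm (G x))\<^sup>2 + h x) * w x)"
      using weak[of w "grad w"] wH L by (simp add: set_int_eq)
    have um: "u \<in> borel_measurable (lebesgue_on \<Omega>)" using uL unfolding Linf_on_def by blast
    obtain Cu where Cu: "AE x in lebesgue_on \<Omega>. \<bar>u x\<bar> \<le> Cu" using Linf_int(2)[OF uL Lm] by blast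
    have Gm: "G \<in> borel_measurable (lebesgue_on \<Omega>)" using uH unfolding H01_def by blast
    have G2: "(norm (G x))\<^sup>2 = (\<Sum>i\<in>Basis. (G x \<bullet> i)\<^sup>2)" for x
    proof -
      have "(norm (G x))\<^sup>2 = G x \<bullet> G x" by (rule power2_norm_eq_inner)
      also have "\<dots> = (\<Sum>i\<in>Basis. (G x \<bullet> i) * (G x \<bullet> i))" by (rule euclidean_inner)
      finally show ?thesis by (simp add: power2_eq_square)
    qed
    have G2i: "integrable (lebesgue_on \<Omega>) (\<lambda>x. (norm (G x))\<^sup>2)"
    proof -
      have "integrable (lebesgue_on \<Omega>) (\<lambda>x. \<Sum>i\<in>Basis. (G x \<bullet> i)\<^sup>2)"
      proof (rule Bochner_Integration.integrable_sum)
        fix i :: 'a assume "i \<in> Basis"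
        then have "Lp_on \<Omega> 2 (\<lambda>x. G x \<bullet> i)" using uH unfolding H01_def by blast
        then show "integrable (lebesgue_on \<Omega>) (\<lambda>x. (G x \<bullet> i)\<^sup>2)" unfolding Lp_on_def abs_powr2 by blast
      qed
      then show ?thesis unfolding G2 .
    qed
    have I1: "integrable (lebesgue_on \<Omega>) (\<lambda>x. cp x * u x * w x)" by (rule cpwint[OF um Cu])
    have I2: "integrable (lebesgue_on \<Omega>) (\<lambda>x. mu x * (norm (G x))\<^sup>2 * w x)"
    proof (rule Bochner_Integration.integrable_bound[of _ "\<lambda>x. Cmu * (norm (G x))\<^sup>2"])
      show "integrable (lebesgue_on \<Omega>) (\<lambda>x. Cmu * (norm (G x))\<^sup>2)" using G2i by simp
      show "(\<lambda>x. mu x * (norm (G x))\<^sup>2 * w x) \<in> borel_measurable (lebesgue_on \<Omega>)" using mum Gm wm by measurable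
      show "AE x in lebesgue_on \<Omega>. norm (mu x * (norm (G x))\<^sup>2 * w x) \<le> norm (Cmu * (norm (G x))\<^sup>2)"
        using Cmu
      proof eventually_elim
        case (elim x)
        have "\<bar>mu x * (norm (G x))\<^sup>2 * w x\<bar> = \<bar>mu x\<bar> * (norm (G x))\<^sup>2 * w x" using w0[of x] by (simp add: abs_mult)
        also have "\<dots> \<le> \<bar>mu x\<bar> * (norm (G x))\<^sup>2 * 1" using w0[of x] by (intro mult_left_mono) auto
        also have "\<dots> \<le> Cmu * (norm (G x))\<^sup>2" using elim by (simp add: mult_right_mono)
        also have "\<dots> \<le> \<bar>Cmu * (norm (G x))\<^sup>2\<bar>" by simp
        finally show ?case by simp
      qed
    qed
    have IK: "integrable (lebesgue_on \<Omega>) (\<lambda>x. mu x * (norm (G x))\<^sup>2 * w x + K)" using I2 by simp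
    have IA: "integrable (lebesgue_on \<Omega>) (\<lambda>x. G x \<bullet> grad w x)"
    proof (rule Bochner_Integration.integrable_bound[of _ "\<lambda>x. \<mu>1 * (norm (G x))\<^sup>2 + K"])
      show "integrable (lebesgue_on \<Omega>) (\<lambda>x. \<mu>1 * (norm (G x))\<^sup>2 + K)" using G2i by simp
      show "(\<lambda>x. G x \<bullet> grad w x) \<in> borel_measurable (lebesgue_on \<Omega>)"
        using Gm gwm by (rule borel_measurable_inner)
      show "AE x in lebesgue_on \<Omega>. norm (G x \<bullet> grad w x) \<le> norm (\<mu>1 * (norm (G x))\<^sup>2 + K)"
      proof (rule AE_I2)
        fix x
        have "\<bar>G x \<bullet> grad w x\<bar> \<le> \<mu>1 * (norm (G x))\<^sup>2 * w x + K" by (rule key)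
        also have "\<dots> \<le> \<mu>1 * (norm (G x))\<^sup>2 * 1 + K" using w0[of x] mu1 by (intro add_right_mono mult_left_mono) auto
        also have "\<dots> \<le> \<bar>\<mu>1 * (norm (G x))\<^sup>2 + K\<bar>" by simp
        finally show "norm (G x \<bullet> grad w x) \<le> norm (\<mu>1 * (norm (G x))\<^sup>2 + K)" by simp
      qed
    qed
    have "integral\<^sup>L (lebesgue_on \<Omega>) (\<lambda>x. ((lam * cp x - cm x) * u x + mu x * (norm (G x))\<^sup>2 + h x) * w x)
        = integral\<^sup>L (lebesgue_on \<Omega>) (\<lambda>x. lam * (cp x * u x * w x) + mu x * (norm (G x))\<^sup>2 * w x + h x * w x)"
    proof (rule integral_cong_AE)
      show "(\<lambda>x. ((lam * cp x - cm x) * u x + mu x * (norm (G x))\<^sup>2 + h x) * w x) \<in> borel_measurable (lebesgue_on \<Omega>)"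
        using cpm cmm um mum Gm hm wm by measurable
      show "(\<lambda>x. lam * (cp x * u x * w x) + mu x * (norm (G x))\<^sup>2 * w x + h x * w x) \<in> borel_measurable (lebesgue_on \<Omega>)"
        using cpm um mum Gm hm wm by measurable
      show "AE x in lebesgue_on \<Omega>. ((lam * cp x - cm x) * u x + mu x * (norm (G x))\<^sup>2 + h x) * w x
          = lam * (cp x * u x * w x) + mu x * (norm (G x))\<^sup>2 * w x + h x * w x"
        using cmball
      proof eventually_elim
        case (elim x)
        show ?case
        proof (cases "x \<in> ball xbar R")
          case True then show ?thesis using elim by (simp add: algebra_simps)
        next
          case False then show ?thesis using wzR by simp
        qed
      qed
    qed
    also have "\<dots> = lam * integral\<^sup>L (lebesgue_on \<Omega>) (\<lambda>x. cp x * u x * w x)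
        + integral\<^sup>L (lebesgue_on \<Omega>) (\<lambda>x. mu x * (norm (G x))\<^sup>2 * w x) + hw"
      unfolding hw_def using I1 I2 hwi by simp
    finally have RHS: "integral\<^sup>L (lebesgue_on \<Omega>) (\<lambda>x. G x \<bullet> grad w x) = lam * integral\<^sup>L (lebesgue_on \<Omega>) (\<lambda>x. cp x * u x * w x)
        + integral\<^sup>L (lebesgue_on \<Omega>) (\<lambda>x. mu x * (norm (G x))\<^sup>2 * w x) + hw"
      using E by simp
    have "integral\<^sup>L (lebesgue_on \<Omega>) (\<lambda>x. G x \<bullet> grad w x)
        \<le> integral\<^sup>L (lebesgue_on \<Omega>) (\<lambda>x. mu x * (norm (G x))\<^sup>2 * w x + K)"
    proof (rule integral_mono_AE[OF IA IK])
      show "AE x in lebesgue_on \<Omega>. G x \<bullet> grad w x \<le> mu x * (norm (G x))\<^sup>2 * w x + K"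
        using muge
      proof eventually_elim
        case (elim x)
        have "G x \<bullet> grad w x \<le> \<mu>1 * (norm (G x))\<^sup>2 * w x + K" using key[of "G x" x] by simp
        also have "\<dots> \<le> mu x * (norm (G x))\<^sup>2 * w x + K"
          using elim w0[of x] by (intro add_right_mono mult_right_mono) auto
        finally show ?case .
      qed
    qed
    also have "\<dots> = integral\<^sup>L (lebesgue_on \<Omega>) (\<lambda>x. mu x * (norm (G x))\<^sup>2 * w x) + K * mO"
      using I2 by (simp add: mO_def)
    finally have "lam * integral\<^sup>L (lebesgue_on \<Omega>) (\<lambda>x. cp x * u x * w x) + hw \<le> K * mO"
      using RHS by simp
    moreover have "a \<le> integral\<^sup>L (lebesgue_on \<Omega>) (\<lambda>x. cp x * u x * w x)"
      unfolding a_def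
    proof (rule integral_mono_AE[OF ai I1])
      have uge': "AE x in lebesgue_on \<Omega>. x \<in> ball xbar R \<longrightarrow> u0 x \<le> u x" unfolding AEiff using uge by eventually_elim auto
      show "AE x in lebesgue_on \<Omega>. cp x * u0 x * w x \<le> cp x * u x * w x"
        using uge' cpnn
      proof eventually_elim
        case (elim x)
        show ?case
        proof (cases "x \<in> ball xbar R")
          case True then show ?thesis using elim w0[of x]
            by (intro mult_right_mono mult_left_mono) auto
        next
          case False then show ?thesis using wzR by simp
        qed
      qed
    qed
    ultimately have "lam * a + hw \<le> K * mO"
      using lam0 by (smt (verit) mult_left_mono)
    then have "lam \<le> (K * mO - hw) / a" using apos by (simp add: field_simps)
    then show False using lam unfolding \<Lambda>_def by linarith
  qed
qed


end
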